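(* Let $\mathcal X,\mathcal Y$ be nonempty convex compact sets and $\mathcal L:\mathcal X\times\mathcal Y\to\mathbb R$ a differentiable, uniformly strongly convex-concave function with saddle point $(x^*,y^* )$ and finite curvature constant $C_{\mathcal L}$ and finite $M_{\mathcal L}$. Let $z^{(t)}$ be a current iterate and, for a direction $d^{(t)}$ and step $\gamma$, let $w_\gamma:=w(z^{(t)}+\gamma d^{(t)})$ and $w_t:=w(z^{(t)})$. (I) If $(x^*,y^* )$ lies in the relative interior of $\mathcal X\times\mathcal Y$, $\mu^{int}_{\mathcal L}>0$, and $d^{(t)}=d^{(t)}_{FW}$ is the FW direction, then for any $\gamma\in[0,1]$, $$w_\gamma\le w_t-\nu^{FW}\gamma g_t^{FW}+\gamma^2C_{\mathcal L},\qquad\nu^{FW}:=1-\frac{M_{\mathcal L}}{\sqrt{\mu^{int}_{\mathcal L}}}.$$ (P) If $\mathcal X=\mathrm{conv}(\mathcal A)$, $\mathcal Y=\mathrm{conv}(\mathcal B)$ with $\mathcal A,\mathcal B$ finite, $\mu^A_{\mathcal L}>0$, and $d^{(t)}$ is the direction chosen by a step of SP-AFW at $z^{(t)}$, then for any $\gamma\in[0,\gamma_{\max}]$, $$w_\gamma\le w_t-\nu^{PFW}\gamma g_t^{PFW}+\gamma^2C_{\mathcal L},\qquad\nu^{PFW}:=\frac12-\frac{M_{\mathcal L}}{\sqrt{\mu^A_{\mathcal L}}}.$$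
   Context: Convex-concave: $\mathcal L(\cdot,y)$ convex, $\mathcal L(x,\cdot)$ concave. Uniformly strongly convex-concave: there are $\mu_{\mathcal X},\mu_{\mathcal Y}>0$ with $\mathcal L(\cdot,y)$ $\mu_{\mathcal X}$-strongly convex for every $y$ and $-\mathcal L(x,\cdot)$ $\mu_{\mathcal Y}$-strongly convex for every $x$. Saddle point: $\mathcal L(x^*,y)\le\mathcal L(x^*,y^* )\le\mathcal L(x,y^* )$ for all $x,y$; $\mathcal L^*:=\mathcal L(x^*,y^* )$. For $z=(x,y)$: $r(z):=(\nabla_x\mathcal L(z),-\nabla_y\mathcal L(z))$, $w(z):=\mathcal L(x,y^* )-\mathcal L(x^*,y)$. With $r^{(t)}:=r(z^{(t)})$, $s^{(t)}\in\arg\min_{s\in\mathcal X\times\mathcal Y}\langle s,r^{(t)}\rangle$, $d^{(t)}_{FW}:=s^{(t)}-z^{(t)}$, $g_t^{FW}:=\langle-r^{(t)},d_{FW}^{(t)}\rangle$. SP-AFW step at $z^{(t)}$: $z^{(t)}$ is given with active sets $S_x^{(t)}\subseteq\mathcal A$, $S_y^{(t)}\subseteq\mathcal B$ and positive weights $\alpha$ summing to one on each, $x^{(t)}=\sum_{v\in S_x^{(t)}}\alpha_vv$, $y^{(t)}=\sum_{v\in S_y^{(t)}}\alpha_vv$. Let $v^{(t)}=(v_x^{(t)},v_y^{(t)})\in\arg\max_{v\in S_x^{(t)}\times S_y^{(t)}}\langle r^{(t)},v\rangle$, $d^{(t)}_A:=z^{(t)}-v^{(t)}$; if $\langle-r^{(t)},d^{(t)}_{FW}\rangle\ge\langle-r^{(t)},d^{(t)}_A\rangle$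 then $d^{(t)}:=d^{(t)}_{FW}$, $\gamma_{\max}:=1$; else $d^{(t)}:=d^{(t)}_A$, $\gamma_{\max}:=\min\{\frac{\alpha_{v_x^{(t)}}}{1-\alpha_{v_x^{(t)}}},\frac{\alpha_{v_y^{(t)}}}{1-\alpha_{v_y^{(t)}}}\}$. $g_t^{PFW}:=\langle-r^{(t)},d^{(t)}_{FW}+d^{(t)}_A\rangle$. Constants. $\mathcal F:=\{\mathcal L(\cdot,y):y\in\mathcal Y\}$, $\mathcal G:=\{-\mathcal L(x,\cdot):x\in\mathcal X\}$. Curvature: $C_f:=\sup\frac2{\gamma^2}(f(x+\gamma(s-v))-f(x)-\gamma\langle s-v,\nabla f(x)\rangle)$ over $x,s,v$ in the domain, $\gamma>0$ with $x+\gamma(s-v)$ in the domain; $C_{\mathcal L}:=\frac12(\sup_{f\in\mathcal F}C_f+\sup_{g\in\mathcal G}C_g)$. Interior strong convexity of $f$ on $\mathcal K$ w.r.t. $x_c$ in its relative interior: $\mu_f^{x_c}:=\inf\frac2{\gamma^2}(f(u)-f(x)-\langle u-x,\nabla f(x)\rangle)$ over $x\in\mathcal K\setminus\{x_c\}$, $\gamma\in(0,1]$, $u=x+\gamma(s-x)$ where $s$ is where the ray from $x$ through $x_c$ meets the relative boundary of $\mathcal K$; $\mu^{int}_{\mathcal L}:=\min\{\inf_{f\in\mathcal F}\mu_f^{x^*},\inf_{g\in\mathcal G}\mu_g^{y^*}\}$. Geometric strong convexity of $f$ on $\mathcal K=\mathrm{conv}(\mathcal A)$: for $x\in\mathcal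 K$, $\mathcal S_x$ = family of $S\subseteq\mathcal A$ such that $x$ is a convex combination of all elements of $S$ with positive coefficients, $v_S(x)\in\arg\max_{v\in S}\langle\nabla f(x),v\rangle$, $v_f(x)\in\arg\min\{\langle\nabla f(x),v\rangle:v=v_S(x),S\in\mathcal S_x\}$, $s_f(x)\in\arg\min_{v\in\mathcal A}\langle\nabla f(x),v\rangle$, $\gamma^A(x,x'):=\frac{\langle-\nabla f(x),x'-x\rangle}{\langle-\nabla f(x),s_f(x)-v_f(x)\rangle}$, $\mu^A_f:=\inf_{x\in\mathcal K}\inf_{x':\langle\nabla f(x),x'-x\rangle<0}\frac2{\gamma^A(x,x')^2}(f(x')-f(x)-\langle x'-x,\nabla f(x)\rangle)$; $\mu^A_{\mathcal L}:=\min\{\inf_{f\in\mathcal F}\mu^A_f\text{ (over }\mathcal A),\inf_{g\in\mathcal G}\mu^A_g\text{ (over }\mathcal B)\}$. Bilinearity: $M_{XY}:=\sup\langle s-v,\frac{\nabla_x\mathcal L(x,y^* )-\nabla_x\mathcal L(x,y)}{\sqrt{\mathcal L^*-\mathcal L(x^*,y)}}\rangle$ over $y\ne y^*$, $x,s,v\in\mathcal X$; $M_{YX}:=\sup\langle s-v,\frac{\nabla_y\mathcal L(x,y)-\nabla_y\mathcal L(x^*,y)}{\sqrt{\mathcal L(x,y^* )-\mathcal L^*}}\rangle$ over $x\ne x^*$, $y,s,v\in\mathcal Y$; $M_{\mathcal L}:=\max\{M_{XY},M_{YX}\}$. *)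

theory Defs
  imports "HOL-Analysis.Analysis" "HOL-Library.Extended_Real"
begin

definition sconvex_on :: "real \<Rightarrow> 'a::real_normed_vector set \<Rightarrow> ('a \<Rightarrow> real) \<Rightarrow> bool" where
  "sconvex_on \<mu> K f \<longleftrightarrow>
     (\<forall>x\<in>K. \<forall>u\<in>K. \<forall>t\<in>{0..1}.
        f ((1 - t) *\<^sub>R x + t *\<^sub>R u) \<le> (1 - t) * f x + t * f u - \<mu> / 2 * t * (1 - t) * (norm (x - u))\<^sup>2)"

definition is_saddle :: "'a set \<Rightarrow> 'b set \<Rightarrow> ('a \<Rightarrow> 'b \<Rightarrow> real) \<Rightarrow> 'a \<Rightarrow> 'b \<Rightarrow> bool" where
  "is_saddle X Y L xs ys \<longleftrightarrow> xs \<in> X \<and> ys \<in> Y \<and>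
     (\<forall>x\<in>X. \<forall>y\<in>Y. L xs y \<le> L xs ys \<and> L xs ys \<le> L x ys)"

definition rvec :: "('a \<Rightarrow> 'b \<Rightarrow> 'a) \<Rightarrow> ('a \<Rightarrow> 'b \<Rightarrow> 'b::uminus) \<Rightarrow> 'a \<times> 'b \<Rightarrow> 'a \<times> 'b" where
  "rvec gx gy z = (gx (fst z) (snd z), - gy (fst z) (snd z))"

definition wgap :: "('a \<Rightarrow> 'b \<Rightarrow> real) \<Rightarrow> 'a \<Rightarrow> 'b \<Rightarrow> 'a \<times> 'b \<Rightarrow> real" where
  "wgap L xs ys z = L (fst z) ys - L xs (snd z)"

definition curv_set :: "'a::real_inner set \<Rightarrow> ('a \<Rightarrow> real) \<Rightarrow> ('a \<Rightarrow> 'a) \<Rightarrow> real set" where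
  "curv_set D f df =
     {2 / \<gamma>\<^sup>2 * (f (x + \<gamma> *\<^sub>R (s - v)) - f x - \<gamma> * ((s - v) \<bullet> df x)) | x s v \<gamma>.
        x \<in> D \<and> s \<in> D \<and> v \<in> D \<and> \<gamma> > 0 \<and> x + \<gamma> *\<^sub>R (s - v) \<in> D}"

definition curv :: "'a::real_inner set \<Rightarrow> ('a \<Rightarrow> real) \<Rightarrow> ('a \<Rightarrow> 'a) \<Rightarrow> ereal" where
  "curv D f df = Sup (ereal ` curv_set D f df)"

definition C_L :: "'a::real_inner set \<Rightarrow> 'b::real_inner set \<Rightarrow> ('a \<Rightarrow> 'b \<Rightarrow> real)
                   \<Rightarrow> ('a \<Rightarrow> 'b \<Rightarrow> 'a) \<Rightarrow> ('a \<Rightarrow> 'b \<Rightarrow> 'b) \<Rightarrow> ereal" where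
  "C_L X Y L gx gy =
     (Sup ((\<lambda>y. curv X (\<lambda>x. L x y) (\<lambda>x. gx x y)) ` Y)
      + Sup ((\<lambda>x. curv Y (\<lambda>y. - L x y) (\<lambda>y. - gy x y)) ` X)) / 2"

definition ray_exit :: "'a::euclidean_space set \<Rightarrow> 'a \<Rightarrow> 'a \<Rightarrow> 'a" where
  "ray_exit K x xc = (THE s. s \<in> rel_frontier K \<and> (\<exists>l>1. s = x + l *\<^sub>R (xc - x)))"

definition mu_int_f :: "'a::euclidean_space set \<Rightarrow> ('a \<Rightarrow> real) \<Rightarrow> ('a \<Rightarrow> 'a) \<Rightarrow> 'a \<Rightarrow> ereal" where
  "mu_int_f K f df xc = Inf (ereal `
     {2 / \<gamma>\<^sup>2 * (f u - f x - (u - x) \<bullet> df x) | x \<gamma> u.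
        x \<in> K - {xc} \<and> 0 < \<gamma> \<and> \<gamma> \<le> 1 \<and> u = x + \<gamma> *\<^sub>R (ray_exit K x xc - x)})"

definition mu_int_L :: "'a::euclidean_space set \<Rightarrow> 'b::euclidean_space set \<Rightarrow> ('a \<Rightarrow> 'b \<Rightarrow> real)
                   \<Rightarrow> ('a \<Rightarrow> 'b \<Rightarrow> 'a) \<Rightarrow> ('a \<Rightarrow> 'b \<Rightarrow> 'b) \<Rightarrow> 'a \<Rightarrow> 'b \<Rightarrow> ereal" where
  "mu_int_L X Y L gx gy xs ys =
     min (INF y\<in>Y. mu_int_f X (\<lambda>x. L x y) (\<lambda>x. gx x y) xs)
         (INF x\<in>X. mu_int_f Y (\<lambda>y. - L x y) (\<lambda>y. - gy x y) ys)"

definition active_fams :: "'a::real_vector set \<Rightarrow> 'a \<Rightarrow> 'a set set" where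
  "active_fams A x = {S. S \<subseteq> A \<and> (\<exists>\<alpha>. (\<forall>v\<in>S. \<alpha> v > 0) \<and> sum \<alpha> S = 1 \<and> (\<Sum>v\<in>S. \<alpha> v *\<^sub>R v) = x)}"

definition v_S :: "'a::real_inner \<Rightarrow> 'a set \<Rightarrow> 'a" where
  "v_S g S = (SOME v. v \<in> S \<and> (\<forall>u\<in>S. g \<bullet> u \<le> g \<bullet> v))"

definition v_f :: "'a::real_inner set \<Rightarrow> 'a \<Rightarrow> 'a \<Rightarrow> 'a" where
  "v_f A g x = (SOME v. (\<exists>S\<in>active_fams A x. v = v_S g S) \<and>
                  (\<forall>S\<in>active_fams A x. g \<bullet> v \<le> g \<bullet> v_S g S))"

definition s_f :: "'a::real_inner set \<Rightarrow> 'a \<Rightarrow> 'a" where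
  "s_f A g = (SOME s. s \<in> A \<and> (\<forall>v\<in>A. g \<bullet> s \<le> g \<bullet> v))"

definition gamma_A :: "'a::real_inner set \<Rightarrow> ('a \<Rightarrow> 'a) \<Rightarrow> 'a \<Rightarrow> 'a \<Rightarrow> real" where
  "gamma_A A df x x' = ((- df x) \<bullet> (x' - x)) / ((- df x) \<bullet> (s_f A (df x) - v_f A (df x) x))"

definition mu_A_f :: "'a::real_inner set \<Rightarrow> ('a \<Rightarrow> real) \<Rightarrow> ('a \<Rightarrow> 'a) \<Rightarrow> ereal" where
  "mu_A_f A f df = Inf (ereal `
     {2 / (gamma_A A df x x')\<^sup>2 * (f x' - f x - (x' - x) \<bullet> df x) | x x'.
        x \<in> convex hull A \<and> x' \<in> convex hull A \<and> df x \<bullet> (x' - x) < 0})"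

definition mu_A_L :: "'a::real_inner set \<Rightarrow> 'b::real_inner set \<Rightarrow> ('a \<Rightarrow> 'b \<Rightarrow> real)
                   \<Rightarrow> ('a \<Rightarrow> 'b \<Rightarrow> 'a) \<Rightarrow> ('a \<Rightarrow> 'b \<Rightarrow> 'b) \<Rightarrow> ereal" where
  "mu_A_L A B L gx gy =
     min (INF y\<in>convex hull B. mu_A_f A (\<lambda>x. L x y) (\<lambda>x. gx x y))
         (INF x\<in>convex hull A. mu_A_f B (\<lambda>y. - L x y) (\<lambda>y. - gy x y))"

definition M_XY :: "'a::real_inner set \<Rightarrow> 'b set \<Rightarrow> ('a \<Rightarrow> 'b \<Rightarrow> real) \<Rightarrow> ('a \<Rightarrow> 'b \<Rightarrow> 'a) \<Rightarrow> 'a \<Rightarrow> 'b \<Rightarrow> ereal" where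
  "M_XY X Y L gx xs ys = Sup (ereal `
     {(s - v) \<bullet> ((gx x ys - gx x y) /\<^sub>R sqrt (L xs ys - L xs y)) | x y s v.
        y \<in> Y \<and> y \<noteq> ys \<and> x \<in> X \<and> s \<in> X \<and> v \<in> X})"

definition M_YX :: "'a set \<Rightarrow> 'b::real_inner set \<Rightarrow> ('a \<Rightarrow> 'b \<Rightarrow> real) \<Rightarrow> ('a \<Rightarrow> 'b \<Rightarrow> 'b) \<Rightarrow> 'a \<Rightarrow> 'b \<Rightarrow> ereal" where
  "M_YX X Y L gy xs ys = Sup (ereal `
     {(s - v) \<bullet> ((gy x y - gy xs y) /\<^sub>R sqrt (L x ys - L xs ys)) | x y s v.
        x \<in> X \<and> x \<noteq> xs \<and> y \<in> Y \<and> s \<in> Y \<and> v \<in> Y})"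

definition M_L :: "'a::real_inner set \<Rightarrow> 'b::real_inner set \<Rightarrow> ('a \<Rightarrow> 'b \<Rightarrow> real)
                   \<Rightarrow> ('a \<Rightarrow> 'b \<Rightarrow> 'a) \<Rightarrow> ('a \<Rightarrow> 'b \<Rightarrow> 'b) \<Rightarrow> 'a \<Rightarrow> 'b \<Rightarrow> ereal" where
  "M_L X Y L gx gy xs ys = max (M_XY X Y L gx xs ys) (M_YX X Y L gy xs ys)"

text \<open>nu = c - M / sqrt mu, with the convention M / sqrt(+infinity) = 0.\<close>
definition nu_coef :: "real \<Rightarrow> ereal \<Rightarrow> ereal \<Rightarrow> real" where
  "nu_coef c M \<mu> = c - (if \<mu> = \<infinity> then 0 else real_of_ereal M / sqrt (real_of_ereal \<mu>))"

end

theory Submission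
  imports Defs
begin

lemma conv_comb_le:
  fixes a :: "'a::real_inner"
  assumes "\<forall>v\<in>S. \<alpha> v > 0" "sum \<alpha> S = 1" "\<forall>v\<in>S. a \<bullet> v \<le> c"
  shows "a \<bullet> (\<Sum>v\<in>S. \<alpha> v *\<^sub>R v) \<le> c"
proof -
  have fin: "finite S" using assms(2) by (metis sum.infinite zero_neq_one)
  have "a \<bullet> (\<Sum>v\<in>S. \<alpha> v *\<^sub>R v) = (\<Sum>v\<in>S. \<alpha> v * (a \<bullet> v))"
    by (simp add: inner_sum_right)
  also have "\<dots> \<le> (\<Sum>v\<in>S. \<alpha> v * c)"
    using assms by (intro sum_mono mult_left_mono) auto
  also have "\<dots> = c" using assms(2) by (simp add: sum_distrib_right[symmetric])
  finally show ?thesis .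
qed

lemma grad_ineq:
  fixes f :: "'a::real_normed_vector \<Rightarrow> real"
  assumes der: "(f has_derivative D) (at x)"
    and cvx: "\<forall>t\<in>{0..1}. f ((1 - t) *\<^sub>R x + t *\<^sub>R y) \<le> (1 - t) * f x + t * f y"
  shows "D (y - x) \<le> f y - f x"
proof -
  let ?v = "y - x"
  define \<phi> where "\<phi> t = f (x + t *\<^sub>R ?v)" for t :: real
  have lin: "linear D" using der has_derivative_linear by blast
  have d1: "((\<lambda>t::real. x + t *\<^sub>R ?v) has_derivative (\<lambda>t. t *\<^sub>R ?v)) (at 0)"
    by (auto intro!: derivative_eq_intros)
  have der0: "(f has_derivative D) (at (x + (0::real) *\<^sub>R ?v))" using der by simp
  have "(\<phi> has_derivative (\<lambda>t. D (t *\<^sub>R ?v))) (at 0)"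
    unfolding \<phi>_def using diff_chain_at[OF d1 der0] by (simp add: o_def)
  moreover have "(\<lambda>t. D (t *\<^sub>R ?v)) = (*) (D ?v)"
    by (rule ext) (simp add: linear_scale[OF lin] mult.commute)
  ultimately have "(\<phi> has_field_derivative D ?v) (at 0)"
    by (simp add: has_field_derivative_def)
  then have "((\<lambda>t. (\<phi> t - \<phi> 0) / (t - 0)) \<longlongrightarrow> D ?v) (at 0)"
    by (simp add: has_field_derivative_iff)
  then have lim: "((\<lambda>t. (\<phi> t - \<phi> 0) / (t - 0)) \<longlongrightarrow> D ?v) (at_right 0)"
    by (rule tendsto_mono[rotated]) (simp add: at_le)
  have ev: "eventually (\<lambda>t. (\<phi> t - \<phi> 0) / (t - 0) \<le> f y - f x) (at_right (0::real))"
  proof (rule eventually_at_rightI[of 0 1])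
    fix t :: real assume t: "t \<in> {0<..<1}"
    have "x + t *\<^sub>R ?v = (1 - t) *\<^sub>R x + t *\<^sub>R y" by (simp add: algebra_simps)
    then have "\<phi> t \<le> (1 - t) * f x + t * f y" using cvx t unfolding \<phi>_def by auto
    then have "\<phi> t - \<phi> 0 \<le> t * (f y - f x)" by (simp add: \<phi>_def algebra_simps)
    then show "(\<phi> t - \<phi> 0) / (t - 0) \<le> f y - f x" using t by (simp add: divide_le_eq mult.commute)
  qed simp
  show ?thesis
    by (rule tendsto_upperbound[OF lim ev]) simp
qed

lemma strict_min:
  fixes f :: "'a::real_normed_vector \<Rightarrow> real"
  assumes sc: "sconvex_on \<mu> K f" and "\<mu> > 0" and "convex K" and xo: "xo \<in> K"
    and mn: "\<forall>z\<in>K. f xo \<le> f z" and x: "x \<in> K" "x \<noteq> xo"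
  shows "f xo < f x"
proof -
  have h: "(1/2::real) \<in> {0..1}" by simp
  have "f ((1 - 1/2) *\<^sub>R x + (1/2) *\<^sub>R xo) \<le> (1 - 1/2) * f x + (1/2) * f xo - \<mu> / 2 * (1/2) * (1 - 1/2) * (norm (x - xo))\<^sup>2"
    using sc x xo h unfolding sconvex_on_def by blast
  moreover have "(1 - 1/2) *\<^sub>R x + (1/2::real) *\<^sub>R xo \<in> K"
    using \<open>convex K\<close> x xo by (intro convexD) auto
  moreover have "norm (x - xo) > 0" using x by simp
  ultimately show ?thesis using mn \<open>\<mu> > 0\<close>
  proof -
    assume h1: "f ((1 - 1/2) *\<^sub>R x + (1/2) *\<^sub>R xo) \<le> (1 - 1/2) * f x + (1/2) * f xo - \<mu> / 2 * (1/2) * (1 - 1/2) * (norm (x - xo))\<^sup>2"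
      and h2: "(1 - 1/2) *\<^sub>R x + (1/2::real) *\<^sub>R xo \<in> K" and h3: "norm (x - xo) > 0"
    have "f xo \<le> f ((1 - 1/2) *\<^sub>R x + (1/2) *\<^sub>R xo)" using mn h2 by blast
    moreover have "0 < \<mu> / 2 * (1/2) * (1 - 1/2) * (norm (x - xo))\<^sup>2" using h3 \<open>\<mu> > 0\<close> by simp
    moreover have "(1 - 1/2) * f x + 1/2 * f xo = f x / 2 + f xo / 2" by simp
    ultimately show ?thesis using h1 by linarith
  qed
qed

lemma sconvex_convex:
  assumes "sconvex_on \<mu> K f" "\<mu> > 0" "x \<in> K" "y \<in> K"
  shows "\<forall>t\<in>{0..1}. f ((1 - t) *\<^sub>R x + t *\<^sub>R y) \<le> (1 - t) * f x + t * f y"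
proof
  fix t :: real assume t: "t \<in> {0..1}"
  have "0 \<le> \<mu> / 2 * t * (1 - t) * (norm (x - y))\<^sup>2" using t assms(2) by auto
  moreover have "f ((1 - t) *\<^sub>R x + t *\<^sub>R y) \<le> (1 - t) * f x + t * f y - \<mu> / 2 * t * (1 - t) * (norm (x - y))\<^sup>2"
    using assms t unfolding sconvex_on_def by blast
  ultimately show "f ((1 - t) *\<^sub>R x + t *\<^sub>R y) \<le> (1 - t) * f x + t * f y" by linarith
qed

lemma curv_bound:
  assumes "x \<in> D" "s \<in> D" "v \<in> D" "\<gamma> \<ge> 0" "x + \<gamma> *\<^sub>R (s - v) \<in> D"
    and c: "curv D f df \<le> ereal c"
  shows "f (x + \<gamma> *\<^sub>R (s - v)) - f x - \<gamma> * ((s - v) \<bullet> df x) \<le> \<gamma>\<^sup>2 / 2 * c"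
proof (cases "\<gamma> = 0")
  case True
  have "curv D f df \<ge> ereal 0"
  proof -
    have "2 / 1\<^sup>2 * (f (x + 1 *\<^sub>R (x - x)) - f x - 1 * ((x - x) \<bullet> df x)) \<in> curv_set D f df"
    proof -
      have "x + 1 *\<^sub>R (x - x) \<in> D" "(0::real) < 1" using assms by auto
      then show ?thesis unfolding curv_set_def using assms by blast
    qed
    then have "ereal 0 \<in> ereal ` curv_set D f df" by (simp add: rev_image_eqI)
    then show ?thesis unfolding curv_def by (rule Sup_upper)
  qed
  then show ?thesis using True c by auto
next
  case False
  then have g: "\<gamma> > 0" using assms by auto
  have "ereal (2 / \<gamma>\<^sup>2 * (f (x + \<gamma> *\<^sub>R (s - v)) - f x - \<gamma> * ((s - v) \<bullet> df x))) \<le> curv D f df"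
  proof -
    have "2 / \<gamma>\<^sup>2 * (f (x + \<gamma> *\<^sub>R (s - v)) - f x - \<gamma> * ((s - v) \<bullet> df x)) \<in> curv_set D f df"
      unfolding curv_set_def using assms g by blast
    then show ?thesis unfolding curv_def by (intro Sup_upper imageI)
  qed
  then have "2 / \<gamma>\<^sup>2 * (f (x + \<gamma> *\<^sub>R (s - v)) - f x - \<gamma> * ((s - v) \<bullet> df x)) \<le> c"
    using order_trans[OF _ c] by (metis ereal_less_eq(3))
  then show ?thesis using g by (simp add: field_simps)
qed

lemma curv_nonneg:
  assumes "x \<in> D" shows "curv D f df \<ge> 0"
proof -
  have "curv D f df \<ge> ereal 0"
  proof -
    have "2 / 1\<^sup>2 * (f (x + 1 *\<^sub>R (x - x)) - f x - 1 * ((x - x) \<bullet> df x)) \<in> curv_set D f df"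
    proof -
      have "x + 1 *\<^sub>R (x - x) \<in> D" "(0::real) < 1" using assms by auto
      then show ?thesis unfolding curv_set_def using assms by blast
    qed
    then have "ereal 0 \<in> ereal ` curv_set D f df" by (simp add: rev_image_eqI)
    then show ?thesis unfolding curv_def by (rule Sup_upper)
  qed
  then show ?thesis by (simp add: zero_ereal_def)
qed

lemma away_in_hull:
  fixes x :: "'a::real_vector"
  assumes pos: "\<forall>v\<in>S. \<alpha> v > 0" and s1: "sum \<alpha> S = 1" and x: "x = (\<Sum>v\<in>S. \<alpha> v *\<^sub>R v)"
    and v0: "v0 \<in> S" and g: "0 \<le> \<gamma>" and gm: "\<alpha> v0 < 1 \<longrightarrow> \<gamma> \<le> \<alpha> v0 / (1 - \<alpha> v0)"
  shows "x + \<gamma> *\<^sub>R (x - v0) \<in> convex hull S"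
proof -
  have fin: "finite S" using s1 by (metis sum.infinite zero_neq_one)
  define \<beta> where "\<beta> v = (1 + \<gamma>) * \<alpha> v - (if v = v0 then \<gamma> else 0)" for v
  have "\<forall>v\<in>S. 0 \<le> \<beta> v"
  proof
    fix v assume v: "v \<in> S"
    show "0 \<le> \<beta> v"
    proof (cases "v = v0")
      case False then show ?thesis using pos v g unfolding \<beta>_def by auto
    next
      case True
      have a0: "\<alpha> v0 > 0" using pos v0 by auto
      show ?thesis
      proof (cases "\<alpha> v0 < 1")
        case True
        then have "\<gamma> * (1 - \<alpha> v0) \<le> \<alpha> v0" using gm by (simp add: le_divide_eq)
        then show ?thesis using \<open>v = v0\<close> unfolding \<beta>_def by (simp add: algebra_simps)
      next
        case False
        then have "0 \<le> \<gamma> * (\<alpha> v0 - 1)" using g by simp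
        moreover have "(1 + \<gamma>) * \<alpha> v0 - \<gamma> = \<alpha> v0 + \<gamma> * (\<alpha> v0 - 1)" by (simp add: algebra_simps)
        ultimately show ?thesis using \<open>v = v0\<close> a0 unfolding \<beta>_def by simp
      qed
    qed
  qed
  moreover have "sum \<beta> S = 1"
    unfolding \<beta>_def using fin v0 s1
    by (simp add: sum_subtractf sum_distrib_left[symmetric] del: sum.distrib)
  moreover have "(\<Sum>v\<in>S. \<beta> v *\<^sub>R v) = x + \<gamma> *\<^sub>R (x - v0)"
  proof -
    have "(\<Sum>v\<in>S. \<beta> v *\<^sub>R v) = (\<Sum>v\<in>S. (1 + \<gamma>) *\<^sub>R (\<alpha> v *\<^sub>R v) - (if v = v0 then \<gamma> *\<^sub>R v else 0))"
      unfolding \<beta>_def by (intro sum.cong) (auto simp: algebra_simps)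
    also have "\<dots> = (1 + \<gamma>) *\<^sub>R x - \<gamma> *\<^sub>R v0"
      using fin v0 by (simp add: sum_subtractf x scaleR_sum_right)
    finally show ?thesis by (simp add: algebra_simps)
  qed
  ultimately show ?thesis using fin by (auto simp: convex_hull_finite)
qed

lemma interior_bound:
  fixes K :: "'a::euclidean_space set" and \<mu> :: ereal
  assumes cK: "convex K" and kK: "compact K" and xc: "xc \<in> rel_interior K" and xt: "xt \<in> K"
    and st: "st \<in> K" and stmin: "\<forall>s'\<in>K. df xt \<bullet> st \<le> df xt \<bullet> s'"
    and mu0: "0 < \<mu>" and muK: "\<mu> \<le> mu_int_f K f df xc"
  shows "f xt - f xc \<le> (if \<mu> = \<infinity> then 0 else (df xt \<bullet> (xt - st))\<^sup>2 / (2 * real_of_ereal \<mu>))"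
proof (cases "xt = xc")
  case True
  then show ?thesis by (auto intro!: divide_nonneg_nonneg real_of_ereal_pos simp: less_imp_le[OF mu0])
next
  case False
  define l where "l = xc - xt"
  have l0: "l \<noteq> 0" using False by (simp add: l_def)
  have xcK: "xc \<in> K" using xc rel_interior_subset by blast
  have "(2::real) *\<^sub>R xc + (-1) *\<^sub>R xt \<in> affine hull K"
    by (rule mem_affine[OF affine_affine_hull]) (use xcK xt hull_inc in auto)
  then have aff: "xc + l \<in> affine hull K" by (simp add: l_def algebra_simps scaleR_2)
  obtain d where d0: "0 < d" and dfr: "xc + d *\<^sub>R l \<in> rel_frontier K"
    and dint: "\<And>e. \<lbrakk>0 \<le> e; e < d\<rbrakk> \<Longrightarrow> xc + e *\<^sub>R l \<in> rel_interior K"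
    using ray_to_rel_frontier[OF compact_imp_bounded[OF kK] xc aff l0] by blast
  define p where "p = xc + d *\<^sub>R l"
  have clK: "closure K = K" using kK by (simp add: compact_imp_closed)
  have pK: "p \<in> K" using dfr clK unfolding p_def rel_frontier_def by auto
  have re: "ray_exit K xt xc = p"
    unfolding ray_exit_def
  proof (rule the_equality)
    show "p \<in> rel_frontier K \<and> (\<exists>l>1. p = xt + l *\<^sub>R (xc - xt))"
      using dfr d0 by (auto simp: p_def l_def algebra_simps intro!: exI[of _ "1 + d"])
  next
    fix s assume s: "s \<in> rel_frontier K \<and> (\<exists>l>1. s = xt + l *\<^sub>R (xc - xt))"
    then obtain l' where l': "l' > 1" "s = xt + l' *\<^sub>R (xc - xt)" by blast
    define e where "e = l' - 1"
    have se: "s = xc + e *\<^sub>R l" using l' by (simp add: e_def l_def algebra_simps)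
    have e0: "e > 0" using l' by (simp add: e_def)
    have sfr: "s \<in> rel_frontier K" using s by blast
    have "\<not> e < d"
    proof
      assume "e < d"
      then have "s \<in> rel_interior K" using dint e0 se by auto
      then show False using sfr by (simp add: rel_frontier_def)
    qed
    moreover have "\<not> d < e"
    proof
      assume de: "d < e"
      have "p \<in> open_segment xc s"
        unfolding in_segment(2)
      proof (intro conjI exI[of _ "d / e"])
        show "xc \<noteq> s" using se e0 l0 by simp
        show "0 < d / e" using d0 e0 by simp
        show "d / e < 1" using de d0 by simp
        have "(1 - d / e) *\<^sub>R xc + (d / e) *\<^sub>R s = xc + ((d / e) * e) *\<^sub>R l"
          by (simp add: se algebra_simps)
        also have "(d / e) * e = d" using e0 by simp
        finally show "p = (1 - d / e) *\<^sub>R xc + (d / e) *\<^sub>R s" by (simp add: p_def)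
      qed
      moreover have "s \<in> closure K" using sfr by (simp add: rel_frontier_def)
      ultimately have "p \<in> rel_interior K"
        using rel_interior_closure_convex_segment[OF cK xc] by blast
      then show False using dfr by (simp add: p_def rel_frontier_def)
    qed
    ultimately have "e = d" by simp
    then show "s = p" using se by (simp add: p_def)
  qed
  define \<gamma> where "\<gamma> = 1 / (1 + d)"
  have g0: "0 < \<gamma>" "\<gamma> \<le> 1" using d0 by (auto simp: \<gamma>_def)
  have pxt: "p - xt = (1 + d) *\<^sub>R (xc - xt)" by (simp add: p_def l_def algebra_simps)
  have u: "xc = xt + \<gamma> *\<^sub>R (ray_exit K xt xc - xt)"
    using d0 by (simp add: re pxt \<gamma>_def)
  define E where "E = 2 / \<gamma>\<^sup>2 * (f xc - f xt - (xc - xt) \<bullet> df xt)"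
  have "E \<in> {2 / \<gamma>\<^sup>2 * (f u - f x - (u - x) \<bullet> df x) | x \<gamma> u.
        x \<in> K - {xc} \<and> 0 < \<gamma> \<and> \<gamma> \<le> 1 \<and> u = x + \<gamma> *\<^sub>R (ray_exit K x xc - x)}"
    unfolding E_def using xt False g0 u by blast
  then have "mu_int_f K f df xc \<le> ereal E" unfolding mu_int_f_def by (intro Inf_lower imageI)
  then have mE: "\<mu> \<le> ereal E" using muK by simp
  then have mfin: "\<mu> \<noteq> \<infinity>" by auto
  define m where "m = real_of_ereal \<mu>"
  have mm: "\<mu> = ereal m" using mfin mu0 by (cases \<mu>) (auto simp: m_def)
  have m0: "m > 0" using mu0 mm by simp
  have mE': "m \<le> E" using mE mm by simp
  define g where "g = df xt"
  define G where "G = g \<bullet> (xt - st)"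
  define a where "a = g \<bullet> (xt - p)"
  have aG: "a \<le> G" using stmin pK by (simp add: a_def G_def g_def inner_diff_right)
  have xcxt: "(xc - xt) \<bullet> df xt = - \<gamma> * a"
  proof -
    have eq: "xc - xt = \<gamma> *\<^sub>R (p - xt)" using u re by (simp add: algebra_simps)
    have "(xc - xt) \<bullet> df xt = \<gamma> * ((p - xt) \<bullet> df xt)" by (simp only: eq inner_scaleR_left)
    also have "\<dots> = - \<gamma> * a" by (simp add: a_def g_def inner_commute inner_diff_left inner_diff_right algebra_simps)
    finally show ?thesis .
  qed
  have "m * \<gamma>\<^sup>2 / 2 \<le> f xc - f xt + \<gamma> * a"
    using mE' g0 by (simp add: E_def xcxt field_simps)
  then have "f xt - f xc \<le> \<gamma> * a - m * \<gamma>\<^sup>2 / 2" by simp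
  also have "\<dots> \<le> \<gamma> * G - m * \<gamma>\<^sup>2 / 2" using aG g0 by (simp add: mult_left_mono)
  also have "\<dots> \<le> G\<^sup>2 / (2 * m)"
  proof -
    have "0 \<le> (G - \<gamma> * m)\<^sup>2" by simp
    then have "2 * m * (\<gamma> * G - m * \<gamma>\<^sup>2 / 2) \<le> G\<^sup>2" by (simp add: power2_eq_square algebra_simps)
    then show ?thesis using m0 by (simp add: field_simps)
  qed
  finally show ?thesis using mfin by (simp add: G_def g_def m_def)
qed

lemma vS_prop:
  fixes g :: "'a::real_inner"
  assumes "finite T" "T \<noteq> {}"
  shows "v_S g T \<in> T \<and> (\<forall>u\<in>T. g \<bullet> u \<le> g \<bullet> v_S g T)"
proof -
  have "\<exists>v. v \<in> T \<and> (\<forall>u\<in>T. g \<bullet> u \<le> g \<bullet> v)"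
  proof -
    have "Max ((\<lambda>u. g \<bullet> u) ` T) \<in> (\<lambda>u. g \<bullet> u) ` T" using assms by (intro Max_in) auto
    then obtain v where "v \<in> T" "g \<bullet> v = Max ((\<lambda>u. g \<bullet> u) ` T)" by auto
    then show ?thesis using assms by (intro exI[of _ v]) auto
  qed
  then show ?thesis unfolding v_S_def by (rule someI_ex)
qed

lemma geom_bound:
  fixes A :: "'a::real_inner set" and \<mu> :: ereal
  assumes fA: "finite A" and xt: "xt \<in> convex hull A" and xo: "xo \<in> convex hull A"
    and SA: "S \<subseteq> A" and pos: "\<forall>v\<in>S. \<alpha> v > 0" and s1: "sum \<alpha> S = 1" and xS: "xt = (\<Sum>v\<in>S. \<alpha> v *\<^sub>R v)"
    and vx: "vx \<in> S" and vmax: "\<forall>v\<in>S. df xt \<bullet> v \<le> df xt \<bullet> vx"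
    and st: "st \<in> convex hull A" and stmin: "\<forall>s'\<in>convex hull A. df xt \<bullet> st \<le> df xt \<bullet> s'"
    and gi: "f xo \<ge> f xt + df xt \<bullet> (xo - xt)"
    and mu0: "0 < \<mu>" and muK: "\<mu> \<le> mu_A_f A f df"
  shows "f xt - f xo \<le> (if \<mu> = \<infinity> then 0 else (df xt \<bullet> (vx - st))\<^sup>2 / (2 * real_of_ereal \<mu>))"
proof (cases "df xt \<bullet> (xo - xt) < 0")
  case False
  then have "f xt - f xo \<le> 0" using gi by simp
  also have "0 \<le> (if \<mu> = \<infinity> then 0 else (df xt \<bullet> (vx - st))\<^sup>2 / (2 * real_of_ereal \<mu>))"
    by (auto intro!: divide_nonneg_nonneg real_of_ereal_pos simp: less_imp_le[OF mu0])
  finally show ?thesis .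
next
  case True
  define g where "g = df xt"
  define F where "F = active_fams A xt"
  have SF: "S \<in> F" unfolding F_def active_fams_def using SA pos s1 xS by blast
  have finF: "finite F"
    by (rule finite_subset[of F "Pow A"]) (use fA in \<open>auto simp: F_def active_fams_def\<close>)
  have Tprops: "finite T \<and> T \<noteq> {}" if hT: "T \<in> F" for T
  proof -
    obtain \<beta> :: "'a \<Rightarrow> real" where "T \<subseteq> A" "sum \<beta> T = 1"
      using hT unfolding F_def active_fams_def by auto
    then show ?thesis using fA finite_subset by fastforce
  qed
  have Fne: "F \<noteq> {}" using SF by auto
  obtain T0 where T0: "T0 \<in> F" "\<forall>T\<in>F. g \<bullet> v_S g T0 \<le> g \<bullet> v_S g T"
  proof -
    have "Min ((\<lambda>T. g \<bullet> v_S g T) ` F) \<in> (\<lambda>T. g \<bullet> v_S g T) ` F" using finF Fne by (intro Min_in) auto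
    then obtain T0 where "T0 \<in> F" "g \<bullet> v_S g T0 = Min ((\<lambda>T. g \<bullet> v_S g T) ` F)" by auto
    then show ?thesis using finF by (intro that[of T0]) auto
  qed
  define vf where "vf = v_f A g xt"
  have vfp: "(\<exists>T\<in>F. vf = v_S g T) \<and> (\<forall>T\<in>F. g \<bullet> vf \<le> g \<bullet> v_S g T)"
    unfolding vf_def v_f_def F_def[symmetric]
    by (rule someI[of _ "v_S g T0"]) (use T0 in blast)
  have Ane: "A \<noteq> {}" using xt by auto
  define sf where "sf = s_f A g"
  have sfp: "sf \<in> A \<and> (\<forall>v\<in>A. g \<bullet> sf \<le> g \<bullet> v)"
  proof -
    have "\<exists>s. s \<in> A \<and> (\<forall>v\<in>A. g \<bullet> s \<le> g \<bullet> v)"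
    proof -
      have "Min ((\<lambda>u. g \<bullet> u) ` A) \<in> (\<lambda>u. g \<bullet> u) ` A" using fA Ane by (intro Min_in) auto
      then obtain v where "v \<in> A" "g \<bullet> v = Min ((\<lambda>u. g \<bullet> u) ` A)" by auto
      then show ?thesis using fA by (intro exI[of _ v]) auto
    qed
    then show ?thesis unfolding sf_def s_f_def by (rule someI_ex)
  qed
  have a: "g \<bullet> xt \<le> g \<bullet> vf"
  proof -
    obtain T1 where T1: "T1 \<in> F" "vf = v_S g T1" using vfp by blast
    then obtain \<beta> where \<beta>: "\<forall>v\<in>T1. \<beta> v > 0" "sum \<beta> T1 = 1" "(\<Sum>v\<in>T1. \<beta> v *\<^sub>R v) = xt"
      unfolding F_def active_fams_def by blast
    have "\<forall>v\<in>T1. g \<bullet> v \<le> g \<bullet> vf" using vS_prop[of T1 g] Tprops[OF T1(1)] T1(2) by auto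
    then show ?thesis using conv_comb_le[OF \<beta>(1,2), of g "g \<bullet> vf"] \<beta>(3) by simp
  qed
  have b: "g \<bullet> vf \<le> g \<bullet> vx"
  proof -
    have "g \<bullet> vf \<le> g \<bullet> v_S g S" using vfp SF by blast
    also have "\<dots> \<le> g \<bullet> vx" using vS_prop[of S g] Tprops[OF SF] vmax by (simp add: g_def)
    finally show ?thesis .
  qed
  have c: "g \<bullet> sf \<le> g \<bullet> xo"
  proof -
    have "convex hull A \<subseteq> {x. inner g x \<ge> g \<bullet> sf}"
      by (rule hull_minimal) (use sfp in \<open>auto simp: convex_halfspace_ge\<close>)
    then show ?thesis using xo by auto
  qed
  have d: "g \<bullet> st \<le> g \<bullet> sf" using stmin sfp hull_subset[of A convex] by (auto simp: g_def)
  define num where "num = g \<bullet> xt - g \<bullet> xo"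
  define den where "den = g \<bullet> vf - g \<bullet> sf"
  define G where "G = g \<bullet> (vx - st)"
  have num0: "num > 0" using True by (simp add: num_def g_def inner_diff_right)
  have dennum: "num \<le> den" using a c by (simp add: num_def den_def)
  have denG: "den \<le> G" using b d by (simp add: den_def G_def inner_diff_right)
  have gA: "gamma_A A df xt xo = num / den"
    unfolding gamma_A_def by (simp add: g_def[symmetric] sf_def[symmetric] vf_def[symmetric] num_def den_def inner_diff_right)
  define E where "E = 2 / (gamma_A A df xt xo)\<^sup>2 * (f xo - f xt - (xo - xt) \<bullet> df xt)"
  have "E \<in> {2 / (gamma_A A df x x')\<^sup>2 * (f x' - f x - (x' - x) \<bullet> df x) | x x'.
        x \<in> convex hull A \<and> x' \<in> convex hull A \<and> df x \<bullet> (x' - x) < 0}"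
    unfolding E_def using xt xo True by blast
  then have "mu_A_f A f df \<le> ereal E" unfolding mu_A_f_def by (intro Inf_lower imageI)
  then have mE: "\<mu> \<le> ereal E" using muK by simp
  then have mfin: "\<mu> \<noteq> \<infinity>" by auto
  define m where "m = real_of_ereal \<mu>"
  have mm: "\<mu> = ereal m" using mfin mu0 by (cases \<mu>) (auto simp: m_def)
  have m0: "m > 0" using mu0 mm by simp
  have mE': "m \<le> E" using mE mm by simp
  define \<gamma> where "\<gamma> = num / den"
  have den0: "den > 0" using num0 dennum by simp
  have g0: "\<gamma> > 0" using num0 den0 by (simp add: \<gamma>_def)
  have numg: "num = \<gamma> * den" using den0 by (simp add: \<gamma>_def)
  have xoxt: "(xo - xt) \<bullet> df xt = - num"
    by (simp add: num_def g_def inner_commute inner_diff_right)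
  have "m * \<gamma>\<^sup>2 / 2 \<le> f xo - f xt + num"
    using mE' g0 by (simp add: E_def gA \<gamma>_def[symmetric] xoxt field_simps)
  then have "f xt - f xo \<le> \<gamma> * den - m * \<gamma>\<^sup>2 / 2" using numg by simp
  also have "\<dots> \<le> den\<^sup>2 / (2 * m)"
  proof -
    have "0 \<le> (den - \<gamma> * m)\<^sup>2" by simp
    then have "2 * m * (\<gamma> * den - m * \<gamma>\<^sup>2 / 2) \<le> den\<^sup>2" by (simp add: power2_eq_square algebra_simps)
    then show ?thesis using m0 by (simp add: field_simps)
  qed
  also have "\<dots> \<le> G\<^sup>2 / (2 * m)"
    using den0 denG m0 by (intro divide_right_mono power_mono) auto
  finally show ?thesis using mfin by (simp add: G_def g_def m_def)
qed

lemma ereal_le_real: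
  fixes M :: ereal
  assumes "ereal e \<le> M" "M < \<infinity>"
  shows "e \<le> real_of_ereal M"
  using assms by (cases M) auto

lemma partial_x:
  assumes "((\<lambda>z. L (fst z) (snd z)) has_derivative (\<lambda>h. a \<bullet> fst h + b \<bullet> snd h)) (at (x, y))"
  shows "((\<lambda>x. L x y) has_derivative (\<lambda>h. a \<bullet> h)) (at x)"
proof -
  have "((\<lambda>x. (x, y)) has_derivative (\<lambda>h. (h, 0))) (at x)"
    by (auto intro!: derivative_eq_intros)
  from diff_chain_at[OF this assms] show ?thesis by (simp add: o_def)
qed

lemma partial_y:
  assumes "((\<lambda>z. L (fst z) (snd z)) has_derivative (\<lambda>h. a \<bullet> fst h + b \<bullet> snd h)) (at (x, y))"
  shows "((\<lambda>y. - L x y) has_derivative (\<lambda>h. - (b \<bullet> h))) (at y)"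
proof -
  have "((\<lambda>y. (x, y)) has_derivative (\<lambda>h. (0, h))) (at y)"
    by (auto intro!: derivative_eq_intros)
  from diff_chain_at[OF this assms] have "((\<lambda>y. L x y) has_derivative (\<lambda>h. b \<bullet> h)) (at y)"
    by (simp add: o_def)
  then show ?thesis by (rule has_derivative_minus)
qed

lemma final_comb:
  fixes \<mu> :: ereal
  assumes hx: "0 \<le> hx" and hy: "0 \<le> hy" and G1: "0 \<le> G1" and G2: "0 \<le> G2" and Mr: "0 \<le> Mr"
    and mu0: "0 < \<mu>"
    and h: "hx + hy \<le> (if \<mu> = \<infinity> then 0 else G1\<^sup>2 / (2 * real_of_ereal \<mu>))
                   + (if \<mu> = \<infinity> then 0 else G2\<^sup>2 / (2 * real_of_ereal \<mu>))"
  shows "Mr * (sqrt hx + sqrt hy) \<le> (if \<mu> = \<infinity> then 0 else Mr / sqrt (real_of_ereal \<mu>)) * (G1 + G2)"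
proof (cases "\<mu> = \<infinity>")
  case True
  then have "hx = 0" "hy = 0" using h hx hy by auto
  then show ?thesis using True by simp
next
  case False
  define r where "r = real_of_ereal \<mu>"
  have r0: "r > 0" using False mu0 unfolding r_def by (cases \<mu>) auto
  have h': "hx + hy \<le> G1\<^sup>2 / (2 * r) + G2\<^sup>2 / (2 * r)" using h False by (simp only: r_def if_False)
  define a where "a = sqrt hx + sqrt hy"
  define b where "b = (G1 + G2) / sqrt r"
  have a0: "0 \<le> a" using hx hy unfolding a_def by simp
  have b0: "0 \<le> b" using G1 G2 r0 unfolding b_def by simp
  have e1: "a\<^sup>2 = hx + hy + 2 * sqrt hx * sqrt hy"
    using hx hy unfolding a_def by (simp add: power2_sum)
  have e2: "2 * sqrt hx * sqrt hy \<le> hx + hy"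
  proof -
    have "0 \<le> (sqrt hx - sqrt hy)\<^sup>2" by (rule zero_le_power2)
    also have "\<dots> = hx + hy - 2 * sqrt hx * sqrt hy" using hx hy by (simp add: power2_diff)
    finally show ?thesis by linarith
  qed
  define q where "q = (G1\<^sup>2 + G2\<^sup>2) / r"
  define q2 where "q2 = (G1 + G2)\<^sup>2 / r"
  have e3: "G1\<^sup>2 / (2 * r) + G2\<^sup>2 / (2 * r) = q / 2"
    unfolding q_def by (simp add: add_divide_distrib)
  have e4: "G1\<^sup>2 + G2\<^sup>2 \<le> (G1 + G2)\<^sup>2"
  proof -
    have "0 \<le> 2 * G1 * G2" using G1 G2 by simp
    then show ?thesis by (simp add: power2_sum)
  qed
  have e5: "q \<le> q2"
    unfolding q_def q2_def using e4 r0 by (rule divide_right_mono[OF _ less_imp_le])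
  have e6: "b\<^sup>2 = q2"
    unfolding b_def q2_def using r0 by (simp add: power_divide)
  have "a\<^sup>2 \<le> b\<^sup>2" using e1 e2 e3 e5 e6 h' by linarith
  then have "a \<le> b" using b0 by (rule power2_le_imp_le)
  then have "Mr * a \<le> Mr * b" using Mr by (rule mult_left_mono)
  moreover have "Mr * b = Mr / sqrt r * (G1 + G2)" unfolding b_def by simp
  ultimately show ?thesis using False unfolding a_def r_def by simp
qed
theorem lemma20:
  fixes X :: "'a::euclidean_space set" and Y :: "'b::euclidean_space set"
    and L :: "'a \<Rightarrow> 'b \<Rightarrow> real"
    and gx :: "'a \<Rightarrow> 'b \<Rightarrow> 'a" and gy :: "'a \<Rightarrow> 'b \<Rightarrow> 'b"
    and \<mu>X \<mu>Y :: real and xs :: 'a and ys :: 'b and zt :: "'a \<times> 'b"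
  assumes "X \<noteq> {}" and "Y \<noteq> {}" and "convex X" and "convex Y" and "compact X" and "compact Y"
    and deriv: "\<And>x y. x \<in> X \<Longrightarrow> y \<in> Y \<Longrightarrow>
        ((\<lambda>z. L (fst z) (snd z)) has_derivative (\<lambda>h. gx x y \<bullet> fst h + gy x y \<bullet> snd h)) (at (x, y))"
    and "\<mu>X > 0" and "\<mu>Y > 0"
    and "\<And>y. y \<in> Y \<Longrightarrow> sconvex_on \<mu>X X (\<lambda>x. L x y)"
    and "\<And>x. x \<in> X \<Longrightarrow> sconvex_on \<mu>Y Y (\<lambda>y. - L x y)"
    and "is_saddle X Y L xs ys"
    and "C_L X Y L gx gy < \<infinity>"
    and "M_L X Y L gx gy xs ys < \<infinity>"
    and "zt \<in> X \<times> Y"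
  shows
    "((xs, ys) \<in> rel_interior (X \<times> Y) \<and> mu_int_L X Y L gx gy xs ys > 0 \<longrightarrow>
       (\<forall>s. s \<in> X \<times> Y \<and> (\<forall>s'\<in>X \<times> Y. s \<bullet> rvec gx gy zt \<le> s' \<bullet> rvec gx gy zt) \<longrightarrow>
          (\<forall>\<gamma>\<in>{0..1}.
             wgap L xs ys (zt + \<gamma> *\<^sub>R (s - zt))
               \<le> wgap L xs ys zt
                  - nu_coef 1 (M_L X Y L gx gy xs ys) (mu_int_L X Y L gx gy xs ys) * \<gamma>
                      * ((- rvec gx gy zt) \<bullet> (s - zt))
                  + \<gamma>\<^sup>2 * real_of_ereal (C_L X Y L gx gy))))
     \<and>
     (\<forall>A B Sx Sy (\<alpha>x :: 'a \<Rightarrow> real) (\<alpha>y :: 'b \<Rightarrow> real) s vx vy.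
        finite A \<and> finite B \<and> X = convex hull A \<and> Y = convex hull B
        \<and> mu_A_L A B L gx gy > 0
        \<and> Sx \<subseteq> A \<and> Sy \<subseteq> B
        \<and> (\<forall>v\<in>Sx. \<alpha>x v > 0) \<and> sum \<alpha>x Sx = 1 \<and> fst zt = (\<Sum>v\<in>Sx. \<alpha>x v *\<^sub>R v)
        \<and> (\<forall>v\<in>Sy. \<alpha>y v > 0) \<and> sum \<alpha>y Sy = 1 \<and> snd zt = (\<Sum>v\<in>Sy. \<alpha>y v *\<^sub>R v)
        \<and> s \<in> X \<times> Y \<and> (\<forall>s'\<in>X \<times> Y. s \<bullet> rvec gx gy zt \<le> s' \<bullet> rvec gx gy zt)
        \<and> (vx, vy) \<in> Sx \<times> Sy \<and> (\<forall>v\<in>Sx \<times> Sy. rvec gx gy zt \<bullet> v \<le> rvec gx gy zt \<bullet> (vx, vy))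
        \<longrightarrow>
        (let r = rvec gx gy zt; dFW = s - zt; dA = zt - (vx, vy);
             \<nu> = nu_coef (1/2) (M_L X Y L gx gy xs ys) (mu_A_L A B L gx gy);
             g = (- r) \<bullet> (dFW + dA); C = real_of_ereal (C_L X Y L gx gy)
         in ((- r) \<bullet> dFW \<ge> (- r) \<bullet> dA \<longrightarrow>
               (\<forall>\<gamma>\<in>{0..1}. wgap L xs ys (zt + \<gamma> *\<^sub>R dFW) \<le> wgap L xs ys zt - \<nu> * \<gamma> * g + \<gamma>\<^sup>2 * C))
          \<and> (\<not> (- r) \<bullet> dFW \<ge> (- r) \<bullet> dA \<longrightarrow>
               (\<forall>\<gamma>. 0 \<le> \<gamma> \<and> (\<alpha>x vx < 1 \<longrightarrow> \<gamma> \<le> \<alpha>x vx / (1 - \<alpha>x vx))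
                        \<and> (\<alpha>y vy < 1 \<longrightarrow> \<gamma> \<le> \<alpha>y vy / (1 - \<alpha>y vy)) \<longrightarrow>
                  wgap L xs ys (zt + \<gamma> *\<^sub>R dA) \<le> wgap L xs ys zt - \<nu> * \<gamma> * g + \<gamma>\<^sup>2 * C))))"
proof -
  note cX = assms(3) and cY = assms(4)
  note scx = assms(10) and scy = assms(11)
  obtain xt yt where zt: "zt = (xt, yt)" by (cases zt)
  have xtX: "xt \<in> X" and ytY: "yt \<in> Y" using assms(15) zt by auto
  have xsX: "xs \<in> X" and ysY: "ys \<in> Y"
    and sad: "\<forall>x\<in>X. \<forall>y\<in>Y. L xs y \<le> L xs ys \<and> L xs ys \<le> L x ys"
    using assms(12) unfolding is_saddle_def by auto
  define hx where "hx = L xt ys - L xs ys"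
  define hy where "hy = L xs ys - L xs yt"
  have hx0: "0 \<le> hx" using sad xtX ysY by (simp add: hx_def)
  have hy0: "0 \<le> hy" using sad ytY xsX by (simp add: hy_def)
  have wt: "wgap L xs ys zt = hx + hy" by (simp add: wgap_def zt hx_def hy_def)
  define Mt where "Mt = M_L X Y L gx gy xs ys"
  define Mr where "Mr = real_of_ereal Mt"
  have Mtfin: "Mt < \<infinity>" using assms(14) by (simp add: Mt_def)
  have crossX: "(s1 - v1) \<bullet> (gx xt ys - gx xt yt) \<le> Mr * sqrt hy" if "s1 \<in> X" "v1 \<in> X" for s1 v1
  proof (cases "yt = ys")
    case True then show ?thesis by (simp add: hy_def)
  next
    case False
    have "- L xs ys < - L xs yt"
      by (rule strict_min[OF scy[OF xsX] assms(9) cY ysY _ ytY False]) (use sad xsX in auto)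
    then have hyp: "hy > 0" by (simp add: hy_def)
    define e where "e = (s1 - v1) \<bullet> ((gx xt ys - gx xt yt) /\<^sub>R sqrt (L xs ys - L xs yt))"
    have "e \<in> {(s - v) \<bullet> ((gx x ys - gx x y) /\<^sub>R sqrt (L xs ys - L xs y)) | x y s v.
        y \<in> Y \<and> y \<noteq> ys \<and> x \<in> X \<and> s \<in> X \<and> v \<in> X}"
      unfolding e_def using ytY False xtX that by blast
    then have "ereal e \<le> M_XY X Y L gx xs ys" unfolding M_XY_def by (intro Sup_upper imageI)
    also have "\<dots> \<le> Mt" unfolding Mt_def M_L_def by (rule max.cobounded1)
    finally have "e \<le> Mr" unfolding Mr_def using Mtfin by (rule ereal_le_real)
    moreover have "e = ((s1 - v1) \<bullet> (gx xt ys - gx xt yt)) / sqrt hy"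
      by (simp add: e_def hy_def divide_inverse mult.commute)
    ultimately show ?thesis using hyp by (simp add: divide_le_eq)
  qed
  have crossY: "(s2 - v2) \<bullet> (gy xt yt - gy xs yt) \<le> Mr * sqrt hx" if "s2 \<in> Y" "v2 \<in> Y" for s2 v2
  proof (cases "xt = xs")
    case True then show ?thesis by (simp add: hx_def)
  next
    case False
    have "L xs ys < L xt ys"
      by (rule strict_min[OF scx[OF ysY] assms(8) cX xsX _ xtX False]) (use sad ysY in auto)
    then have hxp: "hx > 0" by (simp add: hx_def)
    define e where "e = (s2 - v2) \<bullet> ((gy xt yt - gy xs yt) /\<^sub>R sqrt (L xt ys - L xs ys))"
    have "e \<in> {(s - v) \<bullet> ((gy x y - gy xs y) /\<^sub>R sqrt (L x ys - L xs ys)) | x y s v.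
        x \<in> X \<and> x \<noteq> xs \<and> y \<in> Y \<and> s \<in> Y \<and> v \<in> Y}"
      unfolding e_def using ytY False xtX that by blast
    then have "ereal e \<le> M_YX X Y L gy xs ys" unfolding M_YX_def by (intro Sup_upper imageI)
    also have "\<dots> \<le> Mt" unfolding Mt_def M_L_def by (rule max.cobounded2)
    finally have "e \<le> Mr" unfolding Mr_def using Mtfin by (rule ereal_le_real)
    moreover have "e = ((s2 - v2) \<bullet> (gy xt yt - gy xs yt)) / sqrt hx"
      by (simp add: e_def hx_def divide_inverse mult.commute)
    ultimately show ?thesis using hxp by (simp add: divide_le_eq)
  qed
  have Mr0: "0 \<le> Mr"
  proof (cases "(\<exists>y\<in>Y. y \<noteq> ys) \<or> (\<exists>x\<in>X. x \<noteq> xs)")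
    case True
    then have "ereal 0 \<le> Mt"
    proof
      assume "\<exists>y\<in>Y. y \<noteq> ys"
      then obtain y where y: "y \<in> Y" "y \<noteq> ys" by blast
      have "(xs - xs) \<bullet> ((gx xs ys - gx xs y) /\<^sub>R sqrt (L xs ys - L xs y)) \<in> {(s - v) \<bullet> ((gx x ys - gx x y) /\<^sub>R sqrt (L xs ys - L xs y)) | x y s v.
        y \<in> Y \<and> y \<noteq> ys \<and> x \<in> X \<and> s \<in> X \<and> v \<in> X}" using y xsX by blast
      then have "ereal 0 \<le> M_XY X Y L gx xs ys" unfolding M_XY_def
        by (intro Sup_upper) (simp add: rev_image_eqI)
      then show ?thesis unfolding Mt_def M_L_def using max.cobounded1 order_trans by blast
    next
      assume "\<exists>x\<in>X. x \<noteq> xs"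
      then obtain x where x: "x \<in> X" "x \<noteq> xs" by blast
      have "(ys - ys) \<bullet> ((gy x ys - gy xs ys) /\<^sub>R sqrt (L x ys - L xs ys)) \<in> {(s - v) \<bullet> ((gy x y - gy xs y) /\<^sub>R sqrt (L x ys - L xs ys)) | x y s v.
        x \<in> X \<and> x \<noteq> xs \<and> y \<in> Y \<and> s \<in> Y \<and> v \<in> Y}" using x ysY by blast
      then have "ereal 0 \<le> M_YX X Y L gy xs ys" unfolding M_YX_def
        by (intro Sup_upper) (simp add: rev_image_eqI)
      then show ?thesis unfolding Mt_def M_L_def using max.cobounded2 order_trans by blast
    qed
    then show ?thesis unfolding Mr_def using Mtfin by (rule ereal_le_real)
  next
    case False
    have "M_XY X Y L gx xs ys \<le> -\<infinity>" unfolding M_XY_def by (rule Sup_least) (use False in auto)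
    moreover have "M_YX X Y L gy xs ys \<le> -\<infinity>" unfolding M_YX_def by (rule Sup_least) (use False in auto)
    ultimately have "Mt = -\<infinity>" by (simp add: Mt_def M_L_def)
    then show ?thesis by (simp add: Mr_def)
  qed
  define S1 where "S1 = Sup ((\<lambda>y. curv X (\<lambda>x. L x y) (\<lambda>x. gx x y)) ` Y)"
  define S2 where "S2 = Sup ((\<lambda>x. curv Y (\<lambda>y. - L x y) (\<lambda>y. - gy x y)) ` X)"
  have S10: "0 \<le> S1" unfolding S1_def by (rule SUP_upper2[OF ytY curv_nonneg[OF xtX]])
  have S20: "0 \<le> S2" unfolding S2_def by (rule SUP_upper2[OF xtX curv_nonneg[OF ytY]])
  have CL: "C_L X Y L gx gy = (S1 + S2) / 2" by (simp add: C_L_def S1_def S2_def)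
  have "S1 \<noteq> \<infinity> \<and> S2 \<noteq> \<infinity>" using assms(13) S10 S20 unfolding CL
    by (cases S1; cases S2) auto
  then obtain c1 c2 where c1: "S1 = ereal c1" and c2: "S2 = ereal c2"
    using S10 S20 by (cases S1; cases S2) auto
  define C where "C = real_of_ereal (C_L X Y L gx gy)"
  have Cc: "C = (c1 + c2) / 2" by (simp add: C_def CL c1 c2)
  have key: "wgap L xs ys (zt + \<gamma> *\<^sub>R (s1 - v1, s2 - v2))
      \<le> hx + hy - \<gamma> * ((- rvec gx gy zt) \<bullet> (s1 - v1, s2 - v2)) + \<gamma> * (Mr * (sqrt hx + sqrt hy)) + \<gamma>\<^sup>2 * C"
    if s1: "s1 \<in> X" and v1: "v1 \<in> X" and s2: "s2 \<in> Y" and v2: "v2 \<in> Y" and g0: "0 \<le> \<gamma>"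
      and inX: "xt + \<gamma> *\<^sub>R (s1 - v1) \<in> X" and inY: "yt + \<gamma> *\<^sub>R (s2 - v2) \<in> Y" for s1 v1 s2 v2 \<gamma>
  proof -
    define a1 where "a1 = (s1 - v1) \<bullet> gx xt ys"
    define a2 where "a2 = (s1 - v1) \<bullet> gx xt yt"
    define b1 where "b1 = (s2 - v2) \<bullet> gy xs yt"
    define b2 where "b2 = (s2 - v2) \<bullet> gy xt yt"
    have cv1: "curv X (\<lambda>x. L x ys) (\<lambda>x. gx x ys) \<le> ereal c1"
      unfolding c1[symmetric] S1_def by (rule SUP_upper[OF ysY])
    have cv2: "curv Y (\<lambda>y. - L xs y) (\<lambda>y. - gy xs y) \<le> ereal c2"
      unfolding c2[symmetric] S2_def by (rule SUP_upper[OF xsX])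
    have q1: "L (xt + \<gamma> *\<^sub>R (s1 - v1)) ys - L xt ys - \<gamma> * a1 \<le> \<gamma>\<^sup>2 / 2 * c1"
      using curv_bound[OF xtX s1 v1 g0 inX cv1] by (simp add: a1_def)
    have q2: "- L xs (yt + \<gamma> *\<^sub>R (s2 - v2)) + L xs yt + \<gamma> * b1 \<le> \<gamma>\<^sup>2 / 2 * c2"
      using curv_bound[OF ytY s2 v2 g0 inY cv2] by (simp add: b1_def)
    have r1: "a1 - a2 \<le> Mr * sqrt hy" using crossX[OF s1 v1] by (simp add: a1_def a2_def inner_diff_right)
    have r2: "b2 - b1 \<le> Mr * sqrt hx" using crossY[OF s2 v2] by (simp add: b1_def b2_def inner_diff_right)
    have rd: "(- rvec gx gy zt) \<bullet> (s1 - v1, s2 - v2) = - a2 + b2"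
      by (simp add: rvec_def zt a2_def b2_def inner_commute)
    have w: "wgap L xs ys (zt + \<gamma> *\<^sub>R (s1 - v1, s2 - v2)) = L (xt + \<gamma> *\<^sub>R (s1 - v1)) ys - L xs (yt + \<gamma> *\<^sub>R (s2 - v2))"
      by (simp add: wgap_def zt)
    have m1: "\<gamma> * a1 - \<gamma> * a2 \<le> \<gamma> * (Mr * sqrt hy)"
      using mult_left_mono[OF r1 g0] by (simp add: right_diff_distrib)
    have m2: "\<gamma> * b2 - \<gamma> * b1 \<le> \<gamma> * (Mr * sqrt hx)"
      using mult_left_mono[OF r2 g0] by (simp add: right_diff_distrib)
    have e1: "\<gamma> * (- a2 + b2) = \<gamma> * b2 - \<gamma> * a2" by (simp add: algebra_simps)
    have e2: "\<gamma> * (Mr * (sqrt hx + sqrt hy)) = \<gamma> * (Mr * sqrt hx) + \<gamma> * (Mr * sqrt hy)"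
      by (simp add: algebra_simps)
    have e3: "\<gamma>\<^sup>2 * ((c1 + c2) / 2) = \<gamma>\<^sup>2 / 2 * c1 + \<gamma>\<^sup>2 / 2 * c2" by (simp add: algebra_simps)
    show ?thesis unfolding w rd Cc e1 e2 e3
      using q1 q2 m1 m2 hx_def hy_def by linarith
  qed
  have rz: "rvec gx gy zt = (gx xt yt, - gy xt yt)" by (simp add: rvec_def zt)
  have smin: "(\<forall>x'\<in>X. gx xt yt \<bullet> fst s \<le> gx xt yt \<bullet> x') \<and> (\<forall>y'\<in>Y. (- gy xt yt) \<bullet> snd s \<le> (- gy xt yt) \<bullet> y')"
    if sm: "\<forall>s'\<in>X \<times> Y. s \<bullet> rvec gx gy zt \<le> s' \<bullet> rvec gx gy zt" and sXY: "s \<in> X \<times> Y" for s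
  proof (intro conjI ballI)
    fix x' assume x': "x' \<in> X"
    have "(x', snd s) \<in> X \<times> Y" using x' sXY by auto
    then have "s \<bullet> rvec gx gy zt \<le> (x', snd s) \<bullet> rvec gx gy zt" using sm by blast
    then show "gx xt yt \<bullet> fst s \<le> gx xt yt \<bullet> x'"
      by (cases s) (simp add: rz inner_commute)
  next
    fix y' assume y': "y' \<in> Y"
    have "(fst s, y') \<in> X \<times> Y" using y' sXY by auto
    then have "s \<bullet> rvec gx gy zt \<le> (fst s, y') \<bullet> rvec gx gy zt" using sm by blast
    then show "(- gy xt yt) \<bullet> snd s \<le> (- gy xt yt) \<bullet> y'"
      by (cases s) (simp add: rz inner_commute)
  qed
  have hsum: "hx + hy = (L xt yt - L xs yt) + (- L xt yt - - L xt ys)" by (simp add: hx_def hy_def)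
  show ?thesis
  proof (intro conjI)
    show "(xs, ys) \<in> rel_interior (X \<times> Y) \<and> mu_int_L X Y L gx gy xs ys > 0 \<longrightarrow>
       (\<forall>s. s \<in> X \<times> Y \<and> (\<forall>s'\<in>X \<times> Y. s \<bullet> rvec gx gy zt \<le> s' \<bullet> rvec gx gy zt) \<longrightarrow>
          (\<forall>\<gamma>\<in>{0..1}.
             wgap L xs ys (zt + \<gamma> *\<^sub>R (s - zt))
               \<le> wgap L xs ys zt
                  - nu_coef 1 (M_L X Y L gx gy xs ys) (mu_int_L X Y L gx gy xs ys) * \<gamma>
                      * ((- rvec gx gy zt) \<bullet> (s - zt))
                  + \<gamma>\<^sup>2 * real_of_ereal (C_L X Y L gx gy)))"
    proof (intro impI allI ballI)
      fix s :: "'a \<times> 'b" and \<gamma> :: real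
      assume H: "(xs, ys) \<in> rel_interior (X \<times> Y) \<and> mu_int_L X Y L gx gy xs ys > 0"
        and Hs: "s \<in> X \<times> Y \<and> (\<forall>s'\<in>X \<times> Y. s \<bullet> rvec gx gy zt \<le> s' \<bullet> rvec gx gy zt)"
        and g01: "\<gamma> \<in> {0..1}"
      define \<mu> where "\<mu> = mu_int_L X Y L gx gy xs ys"
      have mu0: "0 < \<mu>" using H by (simp add: \<mu>_def)
      obtain sx sy where s: "s = (sx, sy)" by (cases s)
      have sxX: "sx \<in> X" and syY: "sy \<in> Y" using Hs s by auto
      have sxmin: "\<forall>x'\<in>X. gx xt yt \<bullet> sx \<le> gx xt yt \<bullet> x'"
        and symin: "\<forall>y'\<in>Y. (- gy xt yt) \<bullet> sy \<le> (- gy xt yt) \<bullet> y'"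
        using smin[of s] Hs s by auto
      have ri: "xs \<in> rel_interior X" "ys \<in> rel_interior Y"
        using H rel_interior_Times[OF cX cY] by auto
      have mux: "\<mu> \<le> mu_int_f X (\<lambda>x. L x yt) (\<lambda>x. gx x yt) xs"
        unfolding \<mu>_def mu_int_L_def by (rule min.coboundedI1) (rule INF_lower[OF ytY])
      have muy: "\<mu> \<le> mu_int_f Y (\<lambda>y. - L xt y) (\<lambda>y. - gy xt y) ys"
        unfolding \<mu>_def mu_int_L_def by (rule min.coboundedI2) (rule INF_lower[OF xtX])
      have bx: "L xt yt - L xs yt \<le> (if \<mu> = \<infinity> then 0 else (gx xt yt \<bullet> (xt - sx))\<^sup>2 / (2 * real_of_ereal \<mu>))"
        by (rule interior_bound[where K=X and f="\<lambda>x. L x yt" and df="\<lambda>x. gx x yt" and xc=xs and xt=xt and st=sx and \<mu>=\<mu>])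
           (use cX assms(5) ri xtX sxX sxmin mu0 mux in auto)
      have by': "- L xt yt - - L xt ys \<le> (if \<mu> = \<infinity> then 0 else ((- gy xt yt) \<bullet> (yt - sy))\<^sup>2 / (2 * real_of_ereal \<mu>))"
        by (rule interior_bound[where K=Y and f="\<lambda>y. - L xt y" and df="\<lambda>y. - gy xt y" and xc=ys and xt=yt and st=sy and \<mu>=\<mu>])
           (use cY assms(6) ri ytY syY symin mu0 muy in auto)
      define G1 where "G1 = gx xt yt \<bullet> (xt - sx)"
      define G2 where "G2 = (- gy xt yt) \<bullet> (yt - sy)"
      have G10: "0 \<le> G1" using sxmin xtX by (simp add: G1_def inner_diff_right)
      have G20: "0 \<le> G2" using symin ytY unfolding G2_def inner_diff_right by fastforce
      define k where "k = (if \<mu> = \<infinity> then 0 else Mr / sqrt (real_of_ereal \<mu>))"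
      have comb: "Mr * (sqrt hx + sqrt hy) \<le> k * (G1 + G2)"
        unfolding k_def
      proof (rule final_comb[OF hx0 hy0 G10 G20 Mr0 mu0])
        have bx': "L xt yt - L xs yt \<le> (if \<mu> = \<infinity> then 0 else G1\<^sup>2 / (2 * real_of_ereal \<mu>))"
          using bx by (simp only: G1_def)
        have by'': "- L xt yt - - L xt ys \<le> (if \<mu> = \<infinity> then 0 else G2\<^sup>2 / (2 * real_of_ereal \<mu>))"
          using by' by (simp only: G2_def)
        show "hx + hy \<le> (if \<mu> = \<infinity> then 0 else G1\<^sup>2 / (2 * real_of_ereal \<mu>))
                   + (if \<mu> = \<infinity> then 0 else G2\<^sup>2 / (2 * real_of_ereal \<mu>))"
          using bx' by'' hsum by linarith
      qed
      have g0: "0 \<le> \<gamma>" and g1: "\<gamma> \<le> 1" using g01 by auto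
      have inX: "xt + \<gamma> *\<^sub>R (sx - xt) \<in> X"
      proof -
        have "(1 - \<gamma>) *\<^sub>R xt + \<gamma> *\<^sub>R sx \<in> X" using convexD[OF cX xtX sxX] g0 g1 by simp
        then show ?thesis by (simp add: algebra_simps)
      qed
      have inY: "yt + \<gamma> *\<^sub>R (sy - yt) \<in> Y"
      proof -
        have "(1 - \<gamma>) *\<^sub>R yt + \<gamma> *\<^sub>R sy \<in> Y" using convexD[OF cY ytY syY] g0 g1 by simp
        then show ?thesis by (simp add: algebra_simps)
      qed
      have sz: "s - zt = (sx - xt, sy - yt)" by (simp add: s zt)
      have K: "wgap L xs ys (zt + \<gamma> *\<^sub>R (s - zt))
          \<le> hx + hy - \<gamma> * ((- rvec gx gy zt) \<bullet> (s - zt)) + \<gamma> * (Mr * (sqrt hx + sqrt hy)) + \<gamma>\<^sup>2 * C"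
        unfolding sz by (rule key[OF sxX xtX syY ytY g0 inX inY])
      have D: "(- rvec gx gy zt) \<bullet> (s - zt) = G1 + G2"
        by (simp add: sz rz G1_def G2_def inner_diff_right)
      have nu: "nu_coef 1 (M_L X Y L gx gy xs ys) (mu_int_L X Y L gx gy xs ys) = 1 - k"
        by (simp add: nu_coef_def k_def Mr_def Mt_def \<mu>_def)
      have m: "\<gamma> * (Mr * (sqrt hx + sqrt hy)) \<le> \<gamma> * (k * (G1 + G2))" using comb g0 by (rule mult_left_mono)
      have e: "(1 - k) * \<gamma> * (G1 + G2) = \<gamma> * (G1 + G2) - \<gamma> * (k * (G1 + G2))" by (simp add: algebra_simps)
      show "wgap L xs ys (zt + \<gamma> *\<^sub>R (s - zt))
               \<le> wgap L xs ys zt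
                  - nu_coef 1 (M_L X Y L gx gy xs ys) (mu_int_L X Y L gx gy xs ys) * \<gamma>
                      * ((- rvec gx gy zt) \<bullet> (s - zt))
                  + \<gamma>\<^sup>2 * real_of_ereal (C_L X Y L gx gy)"
        unfolding nu D wt C_def[symmetric] e using K[unfolded D] m by linarith
    qed
  next
    show "\<forall>A B Sx Sy (\<alpha>x :: 'a \<Rightarrow> real) (\<alpha>y :: 'b \<Rightarrow> real) s vx vy.
        finite A \<and> finite B \<and> X = convex hull A \<and> Y = convex hull B
        \<and> mu_A_L A B L gx gy > 0
        \<and> Sx \<subseteq> A \<and> Sy \<subseteq> B
        \<and> (\<forall>v\<in>Sx. \<alpha>x v > 0) \<and> sum \<alpha>x Sx = 1 \<and> fst zt = (\<Sum>v\<in>Sx. \<alpha>x v *\<^sub>R v)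
        \<and> (\<forall>v\<in>Sy. \<alpha>y v > 0) \<and> sum \<alpha>y Sy = 1 \<and> snd zt = (\<Sum>v\<in>Sy. \<alpha>y v *\<^sub>R v)
        \<and> s \<in> X \<times> Y \<and> (\<forall>s'\<in>X \<times> Y. s \<bullet> rvec gx gy zt \<le> s' \<bullet> rvec gx gy zt)
        \<and> (vx, vy) \<in> Sx \<times> Sy \<and> (\<forall>v\<in>Sx \<times> Sy. rvec gx gy zt \<bullet> v \<le> rvec gx gy zt \<bullet> (vx, vy))
        \<longrightarrow>
        (let r = rvec gx gy zt; dFW = s - zt; dA = zt - (vx, vy);
             \<nu> = nu_coef (1/2) (M_L X Y L gx gy xs ys) (mu_A_L A B L gx gy);
             g = (- r) \<bullet> (dFW + dA); C = real_of_ereal (C_L X Y L gx gy)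
         in ((- r) \<bullet> dFW \<ge> (- r) \<bullet> dA \<longrightarrow>
               (\<forall>\<gamma>\<in>{0..1}. wgap L xs ys (zt + \<gamma> *\<^sub>R dFW) \<le> wgap L xs ys zt - \<nu> * \<gamma> * g + \<gamma>\<^sup>2 * C))
          \<and> (\<not> (- r) \<bullet> dFW \<ge> (- r) \<bullet> dA \<longrightarrow>
               (\<forall>\<gamma>. 0 \<le> \<gamma> \<and> (\<alpha>x vx < 1 \<longrightarrow> \<gamma> \<le> \<alpha>x vx / (1 - \<alpha>x vx))
                        \<and> (\<alpha>y vy < 1 \<longrightarrow> \<gamma> \<le> \<alpha>y vy / (1 - \<alpha>y vy)) \<longrightarrow>
                  wgap L xs ys (zt + \<gamma> *\<^sub>R dA) \<le> wgap L xs ys zt - \<nu> * \<gamma> * g + \<gamma>\<^sup>2 * C)))"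
    proof (intro allI impI)
      fix A :: "'a set" and B :: "'b set" and Sx :: "'a set" and Sy :: "'b set"
        and \<alpha>x :: "'a \<Rightarrow> real" and \<alpha>y :: "'b \<Rightarrow> real" and s :: "'a \<times> 'b" and vx :: 'a and vy :: 'b
      assume H: "finite A \<and> finite B \<and> X = convex hull A \<and> Y = convex hull B
        \<and> mu_A_L A B L gx gy > 0
        \<and> Sx \<subseteq> A \<and> Sy \<subseteq> B
        \<and> (\<forall>v\<in>Sx. \<alpha>x v > 0) \<and> sum \<alpha>x Sx = 1 \<and> fst zt = (\<Sum>v\<in>Sx. \<alpha>x v *\<^sub>R v)
        \<and> (\<forall>v\<in>Sy. \<alpha>y v > 0) \<and> sum \<alpha>y Sy = 1 \<and> snd zt = (\<Sum>v\<in>Sy. \<alpha>y v *\<^sub>R v)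
        \<and> s \<in> X \<times> Y \<and> (\<forall>s'\<in>X \<times> Y. s \<bullet> rvec gx gy zt \<le> s' \<bullet> rvec gx gy zt)
        \<and> (vx, vy) \<in> Sx \<times> Sy \<and> (\<forall>v\<in>Sx \<times> Sy. rvec gx gy zt \<bullet> v \<le> rvec gx gy zt \<bullet> (vx, vy))"
      have fA: "finite A" and fB: "finite B" and XA: "X = convex hull A" and YB: "Y = convex hull B"
        and mu0: "mu_A_L A B L gx gy > 0" and SxA: "Sx \<subseteq> A" and SyB: "Sy \<subseteq> B"
        and px: "\<forall>v\<in>Sx. \<alpha>x v > 0" and sx1: "sum \<alpha>x Sx = 1" and xteq: "xt = (\<Sum>v\<in>Sx. \<alpha>x v *\<^sub>R v)"
        and py: "\<forall>v\<in>Sy. \<alpha>y v > 0" and sy1: "sum \<alpha>y Sy = 1" and yteq: "yt = (\<Sum>v\<in>Sy. \<alpha>y v *\<^sub>R v)"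
        and sXY: "s \<in> X \<times> Y" and sm: "\<forall>s'\<in>X \<times> Y. s \<bullet> rvec gx gy zt \<le> s' \<bullet> rvec gx gy zt"
        and vS: "vx \<in> Sx" "vy \<in> Sy" and vm: "\<forall>v\<in>Sx \<times> Sy. rvec gx gy zt \<bullet> v \<le> rvec gx gy zt \<bullet> (vx, vy)"
        using H zt by auto
      define \<mu> where "\<mu> = mu_A_L A B L gx gy"
      have mu0': "0 < \<mu>" using mu0 by (simp add: \<mu>_def)
      obtain sx sy where s: "s = (sx, sy)" by (cases s)
      have sxX: "sx \<in> X" and syY: "sy \<in> Y" using sXY s by auto
      have sxmin: "\<forall>x'\<in>X. gx xt yt \<bullet> sx \<le> gx xt yt \<bullet> x'"
        and symin: "\<forall>y'\<in>Y. (- gy xt yt) \<bullet> sy \<le> (- gy xt yt) \<bullet> y'"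
        using smin[OF sm sXY] s by auto
      have vxmax: "\<forall>u\<in>Sx. gx xt yt \<bullet> u \<le> gx xt yt \<bullet> vx"
      proof
        fix u assume "u \<in> Sx"
        then have "rvec gx gy zt \<bullet> (u, vy) \<le> rvec gx gy zt \<bullet> (vx, vy)" using vm vS by blast
        then show "gx xt yt \<bullet> u \<le> gx xt yt \<bullet> vx" by (simp add: rz)
      qed
      have vymax: "\<forall>u\<in>Sy. (- gy xt yt) \<bullet> u \<le> (- gy xt yt) \<bullet> vy"
      proof
        fix u assume "u \<in> Sy"
        then have "rvec gx gy zt \<bullet> (vx, u) \<le> rvec gx gy zt \<bullet> (vx, vy)" using vm vS by blast
        then show "(- gy xt yt) \<bullet> u \<le> (- gy xt yt) \<bullet> vy" by (simp add: rz)
      qed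
      have vxX: "vx \<in> X" unfolding XA using vS(1) SxA hull_subset[of A convex] by blast
      have vyY: "vy \<in> Y" unfolding YB using vS(2) SyB hull_subset[of B convex] by blast
      have gix: "L xs yt \<ge> L xt yt + gx xt yt \<bullet> (xs - xt)"
        using grad_ineq[OF partial_x[OF deriv[OF xtX ytY]] sconvex_convex[OF scx[OF ytY] assms(8) xtX xsX]]
        by simp
      have giy: "- L xt ys \<ge> - L xt yt + (- gy xt yt) \<bullet> (ys - yt)"
        using grad_ineq[OF partial_y[OF deriv[OF xtX ytY]] sconvex_convex[OF scy[OF xtX] assms(9) ytY ysY]]
        by simp
      have mux: "\<mu> \<le> mu_A_f A (\<lambda>x. L x yt) (\<lambda>x. gx x yt)"
        unfolding \<mu>_def mu_A_L_def by (rule min.coboundedI1) (rule INF_lower, use ytY YB in blast)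
      have muy: "\<mu> \<le> mu_A_f B (\<lambda>y. - L xt y) (\<lambda>y. - gy xt y)"
        unfolding \<mu>_def mu_A_L_def by (rule min.coboundedI2) (rule INF_lower, use xtX XA in blast)
      have bx: "L xt yt - L xs yt \<le> (if \<mu> = \<infinity> then 0 else (gx xt yt \<bullet> (vx - sx))\<^sup>2 / (2 * real_of_ereal \<mu>))"
        by (rule geom_bound[where A=A and f="\<lambda>x. L x yt" and df="\<lambda>x. gx x yt" and xt=xt and xo=xs
              and S=Sx and \<alpha>=\<alpha>x and vx=vx and st=sx and \<mu>=\<mu>])
           (use fA xtX xsX SxA px sx1 xteq vS vxmax sxX sxmin gix mu0' mux in \<open>simp_all add: XA[symmetric]\<close>)
      have by': "- L xt yt - - L xt ys \<le> (if \<mu> = \<infinity> then 0 else ((- gy xt yt) \<bullet> (vy - sy))\<^sup>2 / (2 * real_of_ereal \<mu>))"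
        by (rule geom_bound[where A=B and f="\<lambda>y. - L xt y" and df="\<lambda>y. - gy xt y" and xt=yt and xo=ys
              and S=Sy and \<alpha>=\<alpha>y and vx=vy and st=sy and \<mu>=\<mu>])
           (use fB ytY ysY SyB py sy1 yteq vS vymax syY symin giy mu0' muy in \<open>simp_all add: YB[symmetric]\<close>)
      define G1 where "G1 = gx xt yt \<bullet> (vx - sx)"
      define G2 where "G2 = (- gy xt yt) \<bullet> (vy - sy)"
      have G10: "0 \<le> G1"
      proof -
        have "gx xt yt \<bullet> (\<Sum>v\<in>Sx. \<alpha>x v *\<^sub>R v) \<le> gx xt yt \<bullet> vx" by (rule conv_comb_le[OF px sx1 vxmax])
        then have "gx xt yt \<bullet> xt \<le> gx xt yt \<bullet> vx" by (simp only: xteq[symmetric])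
        moreover have "gx xt yt \<bullet> sx \<le> gx xt yt \<bullet> xt" using sxmin xtX by blast
        ultimately show ?thesis by (simp add: G1_def inner_diff_right)
      qed
      have G20: "0 \<le> G2"
      proof -
        have "(- gy xt yt) \<bullet> (\<Sum>v\<in>Sy. \<alpha>y v *\<^sub>R v) \<le> (- gy xt yt) \<bullet> vy" by (rule conv_comb_le[OF py sy1 vymax])
        then have "(- gy xt yt) \<bullet> yt \<le> (- gy xt yt) \<bullet> vy" by (simp only: yteq[symmetric])
        moreover have "(- gy xt yt) \<bullet> sy \<le> (- gy xt yt) \<bullet> yt" using symin ytY by blast
        ultimately show ?thesis unfolding G2_def inner_diff_right by linarith
      qed
      define k where "k = (if \<mu> = \<infinity> then 0 else Mr / sqrt (real_of_ereal \<mu>))"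
      have comb: "Mr * (sqrt hx + sqrt hy) \<le> k * (G1 + G2)"
        unfolding k_def
      proof (rule final_comb[OF hx0 hy0 G10 G20 Mr0 mu0'])
        have bx': "L xt yt - L xs yt \<le> (if \<mu> = \<infinity> then 0 else G1\<^sup>2 / (2 * real_of_ereal \<mu>))"
          using bx by (simp only: G1_def)
        have by'': "- L xt yt - - L xt ys \<le> (if \<mu> = \<infinity> then 0 else G2\<^sup>2 / (2 * real_of_ereal \<mu>))"
          using by' by (simp only: G2_def)
        show "hx + hy \<le> (if \<mu> = \<infinity> then 0 else G1\<^sup>2 / (2 * real_of_ereal \<mu>))
                   + (if \<mu> = \<infinity> then 0 else G2\<^sup>2 / (2 * real_of_ereal \<mu>))"
          using bx' by'' hsum by linarith
      qed
      have nu: "nu_coef (1/2) (M_L X Y L gx gy xs ys) (mu_A_L A B L gx gy) = 1/2 - k"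
        by (simp add: nu_coef_def k_def Mr_def Mt_def \<mu>_def)
      define DF where "DF = (- rvec gx gy zt) \<bullet> (s - zt)"
      define DA where "DA = (- rvec gx gy zt) \<bullet> (zt - (vx, vy))"
      have gG: "(- rvec gx gy zt) \<bullet> (s - zt + (zt - (vx, vy))) = G1 + G2"
        by (simp add: s zt rvec_def G1_def G2_def inner_diff_right)
      have gsplit: "G1 + G2 = DF + DA" unfolding DF_def DA_def gG[symmetric] by (rule inner_add_right)
      have fin: "wgap L xs ys zt - (1/2 - k) * \<gamma> * (G1 + G2) + \<gamma>\<^sup>2 * C \<ge> wgap L xs ys (zt + \<gamma> *\<^sub>R d)"
        if Kd: "wgap L xs ys (zt + \<gamma> *\<^sub>R d) \<le> hx + hy - \<gamma> * D + \<gamma> * (Mr * (sqrt hx + sqrt hy)) + \<gamma>\<^sup>2 * C"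
          and DD: "G1 + G2 \<le> 2 * D" and g0: "0 \<le> \<gamma>" for d D \<gamma>
      proof -
        have m: "\<gamma> * (Mr * (sqrt hx + sqrt hy)) \<le> \<gamma> * (k * (G1 + G2))" using comb g0 by (rule mult_left_mono)
        have m2: "\<gamma> * (G1 + G2) \<le> \<gamma> * (2 * D)" using DD g0 by (rule mult_left_mono)
        have e: "(1/2 - k) * \<gamma> * (G1 + G2) = \<gamma> * (G1 + G2) / 2 - \<gamma> * (k * (G1 + G2))" by (simp add: algebra_simps)
        have e2: "\<gamma> * (2 * D) = 2 * (\<gamma> * D)" by simp
        show ?thesis unfolding e wt using Kd m m2 e2 by linarith
      qed
      show "let r = rvec gx gy zt; dFW = s - zt; dA = zt - (vx, vy);
             \<nu> = nu_coef (1/2) (M_L X Y L gx gy xs ys) (mu_A_L A B L gx gy);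
             g = (- r) \<bullet> (dFW + dA); C = real_of_ereal (C_L X Y L gx gy)
         in ((- r) \<bullet> dFW \<ge> (- r) \<bullet> dA \<longrightarrow>
               (\<forall>\<gamma>\<in>{0..1}. wgap L xs ys (zt + \<gamma> *\<^sub>R dFW) \<le> wgap L xs ys zt - \<nu> * \<gamma> * g + \<gamma>\<^sup>2 * C))
          \<and> (\<not> (- r) \<bullet> dFW \<ge> (- r) \<bullet> dA \<longrightarrow>
               (\<forall>\<gamma>. 0 \<le> \<gamma> \<and> (\<alpha>x vx < 1 \<longrightarrow> \<gamma> \<le> \<alpha>x vx / (1 - \<alpha>x vx))
                        \<and> (\<alpha>y vy < 1 \<longrightarrow> \<gamma> \<le> \<alpha>y vy / (1 - \<alpha>y vy)) \<longrightarrow>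
                  wgap L xs ys (zt + \<gamma> *\<^sub>R dA) \<le> wgap L xs ys zt - \<nu> * \<gamma> * g + \<gamma>\<^sup>2 * C))"
        unfolding Let_def nu gG C_def[symmetric] DF_def[symmetric] DA_def[symmetric]
      proof (intro conjI impI allI ballI)
        fix \<gamma> :: real assume c: "DA \<le> DF" and g01: "\<gamma> \<in> {0..1}"
        have g0: "0 \<le> \<gamma>" and g1: "\<gamma> \<le> 1" using g01 by auto
        have inX: "xt + \<gamma> *\<^sub>R (sx - xt) \<in> X"
        proof -
          have "(1 - \<gamma>) *\<^sub>R xt + \<gamma> *\<^sub>R sx \<in> X" using convexD[OF cX xtX sxX] g0 g1 by simp
          then show ?thesis by (simp add: algebra_simps)
        qed
        have inY: "yt + \<gamma> *\<^sub>R (sy - yt) \<in> Y"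
        proof -
          have "(1 - \<gamma>) *\<^sub>R yt + \<gamma> *\<^sub>R sy \<in> Y" using convexD[OF cY ytY syY] g0 g1 by simp
          then show ?thesis by (simp add: algebra_simps)
        qed
        have sz: "s - zt = (sx - xt, sy - yt)" by (simp add: s zt)
        have K: "wgap L xs ys (zt + \<gamma> *\<^sub>R (s - zt))
            \<le> hx + hy - \<gamma> * DF + \<gamma> * (Mr * (sqrt hx + sqrt hy)) + \<gamma>\<^sup>2 * C"
          unfolding DF_def sz by (rule key[OF sxX xtX syY ytY g0 inX inY])
        show "wgap L xs ys (zt + \<gamma> *\<^sub>R (s - zt)) \<le> wgap L xs ys zt - (1/2 - k) * \<gamma> * (G1 + G2) + \<gamma>\<^sup>2 * C"
          by (rule fin[OF K _ g0]) (use c gsplit in linarith)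
      next
        fix \<gamma> :: real
        assume c: "\<not> DA \<le> DF"
          and gc: "0 \<le> \<gamma> \<and> (\<alpha>x vx < 1 \<longrightarrow> \<gamma> \<le> \<alpha>x vx / (1 - \<alpha>x vx)) \<and> (\<alpha>y vy < 1 \<longrightarrow> \<gamma> \<le> \<alpha>y vy / (1 - \<alpha>y vy))"
        have g0: "0 \<le> \<gamma>" using gc by blast
        have inX: "xt + \<gamma> *\<^sub>R (xt - vx) \<in> X"
          using away_in_hull[OF px sx1 xteq vS(1) g0] gc hull_mono[OF SxA] XA by blast
        have inY: "yt + \<gamma> *\<^sub>R (yt - vy) \<in> Y"
          using away_in_hull[OF py sy1 yteq vS(2) g0] gc hull_mono[OF SyB] YB by blast
        have sz: "zt - (vx, vy) = (xt - vx, yt - vy)" by (simp add: zt)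
        have K: "wgap L xs ys (zt + \<gamma> *\<^sub>R (zt - (vx, vy)))
            \<le> hx + hy - \<gamma> * DA + \<gamma> * (Mr * (sqrt hx + sqrt hy)) + \<gamma>\<^sup>2 * C"
          unfolding DA_def sz by (rule key[OF xtX vxX ytY vyY g0 inX inY])
        show "wgap L xs ys (zt + \<gamma> *\<^sub>R (zt - (vx, vy))) \<le> wgap L xs ys zt - (1/2 - k) * \<gamma> * (G1 + G2) + \<gamma>\<^sup>2 * C"
          by (rule fin[OF K _ g0]) (use c gsplit in linarith)
      qed
    qed
  qed
qed

end
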